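(* Let $d\in\mathbb{N}$, let $I$ be a set and $(A_{i})_{i\in I}$ a collection of pairwise disjoint open subsets of $\mathbb{R}^d$ such that $\mathbb{R}^{d}=\bigcup_{i\in I}\overline{A_{i}}$. Let $C\geq 1$ and let $f\colon \mathbb{R}^{d}\to \mathbb{R}^{d}$ be a mapping such that the restriction $f|_{\bigcup_{i\in I}\partial A_{i}}$ is $C$-bilipschitz and for every $i\in I$ the restriction $f|_{\overline{A_{i}}}$ is $C$-bilipschitz and $f(\overline{A_i})=\overline{A_i}$. Then $f$ is $C$-bilipschitz.
   Context: $\overline{A}$ and $\partial A$ denote closure and boundary in $\mathbb{R}^d$. A mapping is $C$-bilipschitz if it is injective and both it and its inverse (on its image) are $C$-Lipschitz with respect to the Euclidean norm. *)

theory Defs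
  imports "HOL-Analysis.Analysis"
begin

definition bilipschitz_on :: "real \<Rightarrow> 'a::metric_space set \<Rightarrow> ('a \<Rightarrow> 'b::metric_space) \<Rightarrow> bool" where
  "bilipschitz_on C S f \<longleftrightarrow> inj_on f S \<and>
     (\<forall>x\<in>S. \<forall>y\<in>S. dist (f x) (f y) \<le> C * dist x y) \<and>
     (\<forall>u\<in>f ` S. \<forall>v\<in>f ` S. dist (the_inv_into S f u) (the_inv_into S f v) \<le> C * dist u v)"

end

theory Submission
  imports Defs
begin

lemma seg_dist: fixes x y q :: "'a::euclidean_space"
  assumes "q \<in> closed_segment x y" shows "dist x q + dist q y = dist x y"
  using assms between[of x y q] between_mem_segment[of x y q] by simp

lemma frontier_closed_eq: "closed K \<Longrightarrow> frontier K = K - interior K"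
  by (simp add: frontier_def closure_closed)

lemma seg_lemma:
  fixes x y :: "'a::euclidean_space"
  assumes K: "closed K" and L: "closed L" and x: "x \<in> K" and y: "y \<in> L"
    and d1: "interior K \<inter> L = {}" and d2: "K \<inter> interior L = {}"
  shows "\<exists>p q. p \<in> frontier K \<and> q \<in> frontier L \<and> dist x p + dist p q + dist q y = dist x y"
proof -
  obtain q where q: "q \<in> closed_segment x y" "q \<in> frontier L"
  proof (cases "x \<in> L")
    case True
    then have "x \<in> frontier L" using x d2 frontier_closed_eq[OF L] by auto
    then show ?thesis using that by auto
  next
    case False
    have "closed_segment x y \<inter> frontier L \<noteq> {}"
      apply (rule connected_Int_frontier)
      using False y by auto
    then show ?thesis using that by auto
  qed
  obtain p where p: "p \<in> closed_segment x q" "p \<in> frontier K"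
  proof (cases "q \<in> K")
    case True
    have "q \<in> L" using q(2) frontier_closed_eq[OF L] by auto
    then have "q \<in> frontier K" using True d1 frontier_closed_eq[OF K] by auto
    then show ?thesis using that by auto
  next
    case False
    have "closed_segment x q \<inter> frontier K \<noteq> {}"
      apply (rule connected_Int_frontier)
      using False x by auto
    then show ?thesis using that by auto
  qed
  have "dist x p + dist p q + dist q y = dist x y"
    using seg_dist[OF p(1)] seg_dist[OF q(1)] by simp
  then show ?thesis using p q by blast
qed

lemma bl_fwd: "bilipschitz_on C S f \<Longrightarrow> x \<in> S \<Longrightarrow> y \<in> S \<Longrightarrow> dist (f x) (f y) \<le> C * dist x y"
  unfolding bilipschitz_on_def by blast

lemma bl_bwd: "bilipschitz_on C S f \<Longrightarrow> x \<in> S \<Longrightarrow> y \<in> S \<Longrightarrow> dist x y \<le> C * dist (f x) (f y)"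
  unfolding bilipschitz_on_def
  by (metis image_eqI the_inv_into_f_f)

lemma bl_inj: "bilipschitz_on C S f \<Longrightarrow> inj_on f S"
  unfolding bilipschitz_on_def by blast

theorem lemma3p4:
  fixes A :: "'i \<Rightarrow> 'a::euclidean_space set"
    and I :: "'i set"
    and f :: "'a \<Rightarrow> 'a"
    and C :: real
  assumes open_A: "\<And>i. i \<in> I \<Longrightarrow> open (A i)"
    and disj: "\<And>i j. i \<in> I \<Longrightarrow> j \<in> I \<Longrightarrow> i \<noteq> j \<Longrightarrow> A i \<inter> A j = {}"
    and cover: "(\<Union>i\<in>I. closure (A i)) = UNIV"
    and C: "C \<ge> 1"
    and bd: "bilipschitz_on C (\<Union>i\<in>I. frontier (A i)) f"
    and pieces: "\<And>i. i \<in> I \<Longrightarrow> bilipschitz_on C (closure (A i)) f"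
    and inv: "\<And>i. i \<in> I \<Longrightarrow> f ` closure (A i) = closure (A i)"
  shows "bilipschitz_on C UNIV f"
proof -
  let ?U = "\<Union>i\<in>I. frontier (A i)"
  have F1: "interior (closure (A i)) \<inter> closure (A j) = {}"
    if "i \<in> I" "j \<in> I" "i \<noteq> j" for i j
  proof -
    have "A j \<inter> closure (A i) = {}"
      using open_Int_closure_eq_empty[OF open_A[OF that(2)]] disj[OF that] by blast
    then have "A j \<inter> interior (closure (A i)) = {}"
      using interior_subset by blast
    then show ?thesis
      using open_Int_closure_eq_empty[of "interior (closure (A i))" "A j"] by blast
  qed
  have F1': "closure (A i) \<inter> interior (closure (A j)) = {}"
    if "i \<in> I" "j \<in> I" "i \<noteq> j" for i j
    using F1[of j i] that by blast
  have Aint: "A i \<subseteq> interior (closure (A i))" if "i \<in> I" for i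
    by (simp add: interior_maximal closure_subset open_A that)
  have F2: "f ` A i \<subseteq> interior (closure (A i))" if "i \<in> I" for i
  proof -
    have "C-lipschitz_on (closure (A i)) f"
      apply (rule lipschitz_onI)
      using bl_fwd[OF pieces[OF that]] C by auto
    then have "continuous_on (A i) f"
      using lipschitz_on_continuous_on continuous_on_subset closure_subset by blast
    moreover have "inj_on f (A i)"
      using bl_inj[OF pieces[OF that]] closure_subset inj_on_subset by metis
    ultimately have "open (f ` A i)" using invariance_of_domain open_A[OF that] by blast
    moreover have "f ` A i \<subseteq> closure (A i)" using inv[OF that] closure_subset by blast
    ultimately show ?thesis by (simp add: interior_maximal)
  qed
  have FR: "frontier (closure (A i)) \<subseteq> frontier (A i)" if "i \<in> I" for i
    using Aint[OF that] frontier_closed_eq[of "closure (A i)"]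
    by (auto simp: frontier_def interior_open open_A that)
  have frcl: "frontier (A i) \<subseteq> closure (A i)" for i
    by (simp add: frontier_def)
  have frA: "frontier (A i) = closure (A i) - A i" if "i \<in> I" for i
    using that open_A by (simp add: frontier_def interior_open)
  have mem: "\<exists>i\<in>I. x \<in> closure (A i)" for x using cover by blast
  have injf: "f x = f y \<Longrightarrow> x = y" for x y
  proof -
    assume e: "f x = f y"
    obtain i where i: "i \<in> I" "x \<in> closure (A i)" using mem by blast
    obtain j where j: "j \<in> I" "y \<in> closure (A j)" using mem by blast
    show "x = y"
    proof (cases "i = j")
      case True
      then show ?thesis using inj_onD[OF bl_inj[OF pieces[OF i(1)]] e] i j by blast
    next
      case False
      have fx: "f x \<in> closure (A i)" "f x \<in> closure (A j)"
      proof -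
        have "f x \<in> f ` closure (A i)" "f y \<in> f ` closure (A j)" using i j by auto
        then show "f x \<in> closure (A i)" "f x \<in> closure (A j)"
          using inv[OF i(1)] inv[OF j(1)] e by auto
      qed
      have "f x \<notin> interior (closure (A i))" using F1[OF i(1) j(1) False] fx by blast
      then have "x \<notin> A i" using F2[OF i(1)] by blast
      then have "x \<in> frontier (A i)" using i frA[OF i(1)] by blast
      then have xU: "x \<in> ?U" using i by blast
      have "f y \<notin> interior (closure (A j))" using F1[OF j(1) i(1) not_sym[OF False]] fx(1) unfolding e by blast
      then have "y \<notin> A j" using F2[OF j(1)] by blast
      then have "y \<in> frontier (A j)" using j frA[OF j(1)] by blast
      then have yU: "y \<in> ?U" using j by blast
      show ?thesis using inj_onD[OF bl_inj[OF bd] e xU yU] .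
    qed
  qed
  have fwd: "dist (f x) (f y) \<le> C * dist x y" for x y
  proof -
    obtain i where i: "i \<in> I" "x \<in> closure (A i)" using mem by blast
    obtain j where j: "j \<in> I" "y \<in> closure (A j)" using mem by blast
    show ?thesis
    proof (cases "i = j")
      case True
      then show ?thesis using bl_fwd[OF pieces[OF i(1)]] i j by auto
    next
      case False
      obtain p q where pq: "p \<in> frontier (closure (A i))" "q \<in> frontier (closure (A j))"
        "dist x p + dist p q + dist q y = dist x y"
        using seg_lemma[OF closed_closure closed_closure i(2) j(2) F1[OF i(1) j(1) False]
          F1'[OF i(1) j(1) False]] by blast
      have pU: "p \<in> ?U" "p \<in> closure (A i)" using pq(1) FR[OF i(1)] frcl i(1) by blast+
      have qU: "q \<in> ?U" "q \<in> closure (A j)" using pq(2) FR[OF j(1)] frcl j(1) by blast+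
      have "dist (f x) (f y) \<le> dist (f x) (f p) + dist (f p) (f q) + dist (f q) (f y)"
        using dist_triangle[of "f x" "f y" "f p"] dist_triangle[of "f p" "f y" "f q"] by linarith
      also have "\<dots> \<le> C * dist x p + C * dist p q + C * dist q y"
        using bl_fwd[OF pieces[OF i(1)] i(2) pU(2)] bl_fwd[OF bd pU(1) qU(1)]
          bl_fwd[OF pieces[OF j(1)] qU(2) j(2)] by linarith
      also have "\<dots> = C * dist x y" by (simp add: pq(3)[symmetric] algebra_simps)
      finally show ?thesis .
    qed
  qed
  have bwd: "dist x y \<le> C * dist (f x) (f y)" for x y
  proof -
    obtain i where i: "i \<in> I" "x \<in> closure (A i)" using mem by blast
    obtain j where j: "j \<in> I" "y \<in> closure (A j)" using mem by blast
    show ?thesis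
    proof (cases "i = j")
      case True
      then show ?thesis using bl_bwd[OF pieces[OF i(1)]] i j by auto
    next
      case False
      have fx: "f x \<in> closure (A i)" "f y \<in> closure (A j)"
        using inv[OF i(1)] inv[OF j(1)] i j by auto
      obtain p q where pq: "p \<in> frontier (closure (A i))" "q \<in> frontier (closure (A j))"
        "dist (f x) p + dist p q + dist q (f y) = dist (f x) (f y)"
        using seg_lemma[OF closed_closure closed_closure fx(1) fx(2) F1[OF i(1) j(1) False]
          F1'[OF i(1) j(1) False]] by blast
      have "p \<in> closure (A i)" using pq(1) FR[OF i(1)] frcl by blast
      then obtain a where a: "a \<in> closure (A i)" "p = f a" using inv[OF i(1)] by (metis imageE)
      have "p \<notin> interior (closure (A i))" using pq(1) by (simp add: frontier_def)
      then have "a \<notin> A i" using F2[OF i(1)] a by blast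
      then have "a \<in> frontier (A i)" using a frA[OF i(1)] by blast
      then have aU: "a \<in> ?U" using i by blast
      have "q \<in> closure (A j)" using pq(2) FR[OF j(1)] frcl by blast
      then obtain b where b: "b \<in> closure (A j)" "q = f b" using inv[OF j(1)] by (metis imageE)
      have "q \<notin> interior (closure (A j))" using pq(2) by (simp add: frontier_def)
      then have "b \<notin> A j" using F2[OF j(1)] b by blast
      then have "b \<in> frontier (A j)" using b frA[OF j(1)] by blast
      then have bU: "b \<in> ?U" using j by blast
      have "dist x y \<le> dist x a + dist a b + dist b y"
        using dist_triangle[of x y a] dist_triangle[of a y b] by linarith
      also have "\<dots> \<le> C * dist (f x) p + C * dist p q + C * dist q (f y)"
        using bl_bwd[OF pieces[OF i(1)] i(2) a(1)] bl_bwd[OF bd aU bU]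
          bl_bwd[OF pieces[OF j(1)] b(1) j(2)] unfolding a(2) b(2) by linarith
      also have "\<dots> = C * dist (f x) (f y)" by (simp add: pq(3)[symmetric] algebra_simps)
      finally show ?thesis .
    qed
  qed
  have injU: "inj_on f UNIV" using injf by (auto intro: inj_onI)
  show ?thesis
    unfolding bilipschitz_on_def
    using injU fwd bwd by (auto simp: the_inv_into_f_f)
qed

end
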